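(* Let $(X,Y)$ be a pair of real-valued random variables, and assume there exist disjoint intervals $G$ and $H$ and Borel sets $G'\subseteq G$, $H'\subseteq H$ such that the events $\{X\in G'\}$ and $\{Y\in H'\}$ are almost surely equal and $P(X\in G')>0$. Then there is no integrable random variable $Z$ with $X=E(Z\mid X)$ and $Y=E(Z\mid Y)$. In particular, if $(X,Y)$ takes values in $[0,1]^2$ and satisfies this condition, then $(X,Y)$ is not coherent.
   Context: A pair $(X,Y)$ of random variables with values in $[0,1]$ is coherent if there is an event $A$ with $X=P(A\mid X)$ and $Y=P(A\mid Y)$ (equivalently $X=P(A\mid\mathcal G)$, $Y=P(A\mid\mathcal H)$ for some sub-$\sigma$-fields $\mathcal G,\mathcal H$). *)

theory Defs
  imports "HOL-Probability.Probability"
begin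

definition gen_sigma :: "'a measure \<Rightarrow> ('a \<Rightarrow> real) \<Rightarrow> 'a measure" where
  "gen_sigma M X = vimage_algebra (space M) X borel"

definition coherent :: "'a measure \<Rightarrow> ('a \<Rightarrow> real) \<Rightarrow> ('a \<Rightarrow> real) \<Rightarrow> bool" where
  "coherent M X Y \<longleftrightarrow> (\<exists>A\<in>sets M.
      (AE \<omega> in M. X \<omega> = real_cond_exp M (gen_sigma M X) (indicator A) \<omega>) \<and>
      (AE \<omega> in M. Y \<omega> = real_cond_exp M (gen_sigma M Y) (indicator A) \<omega>))"

end

theory Submission
  imports Defs
begin

lemma gen_sigma_subalg:
  assumes "prob_space M" "X \<in> borel_measurable M"
  shows "sigma_finite_subalgebra M (gen_sigma M X)"
proof -
  interpret prob_space M by fact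
  have "subalgebra M (gen_sigma M X)"
    unfolding subalgebra_def gen_sigma_def
    using assms(2) by (auto simp: sets_vimage_algebra2 measurable_sets)
  then have "finite_measure_subalgebra M (gen_sigma M X)"
    by (simp add: finite_measure_subalgebra_def finite_measure_subalgebra_axioms_def finite_measure_axioms)
  then show ?thesis by (rule finite_measure_subalgebra_is_sigma_finite)
qed

lemma gen_sigma_set:
  assumes "B \<in> sets borel"
  shows "{\<omega> \<in> space M. X \<omega> \<in> B} \<in> sets (gen_sigma M X)"
proof -
  have "X -` B \<inter> space M \<in> sets (gen_sigma M X)"
    unfolding gen_sigma_def using assms by (intro in_vimage_algebra) auto
  moreover have "X -` B \<inter> space M = {\<omega> \<in> space M. X \<omega> \<in> B}" by auto
  ultimately show ?thesis by simp
qed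

lemma cond_exp_ind:
  assumes "prob_space M" "X \<in> borel_measurable M" "B \<in> sets borel" "integrable M Z"
    and "AE \<omega> in M. X \<omega> = real_cond_exp M (gen_sigma M X) Z \<omega>"
  shows "(\<integral>\<omega>. indicator {\<omega> \<in> space M. X \<omega> \<in> B} \<omega> * X \<omega> \<partial>M)
       = (\<integral>\<omega>. indicator {\<omega> \<in> space M. X \<omega> \<in> B} \<omega> * Z \<omega> \<partial>M)"
    and "integrable M (\<lambda>\<omega>. indicator {\<omega> \<in> space M. X \<omega> \<in> B} \<omega> * X \<omega>)"
proof -
  interpret sigma_finite_subalgebra M "gen_sigma M X" using gen_sigma_subalg assms(1,2) .
  interpret prob_space M by fact
  let ?A = "{\<omega> \<in> space M. X \<omega> \<in> B}"
  have AF: "?A \<in> sets (gen_sigma M X)" using gen_sigma_set assms(3) .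
  have AM: "?A \<in> sets M" using assms(2,3) by measurable
  have [measurable]: "indicator ?A \<in> borel_measurable (gen_sigma M X)" using AF by simp
  have iZ: "integrable M (\<lambda>x. indicator ?A x * Z x)"
    using integrable_mult_indicator[OF AM assms(4)] by simp
  have e: "(\<integral>x. indicator ?A x * real_cond_exp M (gen_sigma M X) Z x \<partial>M) = (\<integral>x. indicator ?A x * Z x \<partial>M)"
    by (rule real_cond_exp_intg(2)[OF iZ]) (auto simp: borel_measurable_integrable assms(4))
  have i2: "integrable M (\<lambda>x. indicator ?A x * real_cond_exp M (gen_sigma M X) Z x)"
    by (rule real_cond_exp_intg(1)[OF iZ]) (auto simp: borel_measurable_integrable assms(4))
  have ae: "AE x in M. indicator ?A x * real_cond_exp M (gen_sigma M X) Z x = indicator ?A x * X x"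
    using assms(5) by auto
  have mX: "(\<lambda>\<omega>. indicator ?A \<omega> * X \<omega>) \<in> borel_measurable M"
    by (intro borel_measurable_times borel_measurable_indicator AM assms(2))
  show "integrable M (\<lambda>\<omega>. indicator ?A \<omega> * X \<omega>)"
    using integrable_cong_AE_imp[OF i2 mX ae] .
  have "(\<integral>x. indicator ?A x * X x \<partial>M) = (\<integral>x. indicator ?A x * real_cond_exp M (gen_sigma M X) Z x \<partial>M)"
    using ae mX by (intro integral_cong_AE) (auto simp: borel_measurable_integrable[OF i2])
  with e show "(\<integral>\<omega>. indicator ?A \<omega> * X \<omega> \<partial>M) = (\<integral>\<omega>. indicator ?A \<omega> * Z \<omega> \<partial>M)" by simp
qed

lemma zero_int_pos:
  fixes f :: "'a \<Rightarrow> real"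
  assumes "prob_space M" "integrable M f" "(\<integral>\<omega>. f \<omega> \<partial>M) = 0" "A \<in> sets M"
    and "AE \<omega> in M. (\<omega> \<in> A \<longrightarrow> f \<omega> > 0) \<and> (\<omega> \<notin> A \<longrightarrow> f \<omega> = 0)"
  shows "measure M A = 0"
proof -
  have "\<And>\<omega>. (\<omega> \<in> A \<longrightarrow> f \<omega> > 0) \<and> (\<omega> \<notin> A \<longrightarrow> f \<omega> = 0) \<Longrightarrow> 0 \<le> f \<omega>"
    by (case_tac "\<omega> \<in> A") auto
  then have "AE \<omega> in M. 0 \<le> f \<omega>" by (rule eventually_mono[OF assms(5)])
  then have "AE \<omega> in M. f \<omega> = 0" using integral_nonneg_eq_0_iff_AE[OF assms(2)] assms(3) by simp
  then have "AE \<omega> in M. \<omega> \<notin> A" using assms(5) by eventually_elim auto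
  moreover have e: "{x\<in>space M. \<not> x \<notin> A} = A" using sets.sets_into_space[OF assms(4)] by auto
  ultimately have "emeasure M A = 0" using AE_iff_measurable[OF assms(4) e] by simp
  then show ?thesis by (simp add: measure_def)
qed

lemma interval_order:
  fixes G H :: "real set"
  assumes "is_interval G" "is_interval H" "G \<inter> H = {}"
  shows "(\<forall>g\<in>G. \<forall>h\<in>H. g < h) \<or> (\<forall>g\<in>G. \<forall>h\<in>H. h < g)"
proof (cases "G = {} \<or> H = {}")
  case True then show ?thesis by auto
next
  case False
  then obtain g0 h0 where g0: "g0 \<in> G" and h0: "h0 \<in> H" by auto
  have key: "\<forall>g\<in>G'. \<forall>h\<in>H'. g < h" if "is_interval G'" "is_interval H'" "G' \<inter> H' = {}"
     "g0' \<in> G'" "h0' \<in> H'" "g0' < h0'" for G' H' :: "real set" and g0' h0'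
  proof (intro ballI)
    fix g h assume g: "g \<in> G'" and h: "h \<in> H'"
    show "g < h"
    proof (rule ccontr)
      assume "\<not> g < h"
      then have hg: "h \<le> g" by simp
      show False
      proof (cases "h \<le> g0'")
        case True
        have "\<forall>a\<in>H'. \<forall>b\<in>H'. \<forall>x. a \<le> x \<and> x \<le> b \<longrightarrow> x \<in> H'" using that(2) is_interval_1 by blast
        then have "h \<le> g0' \<and> g0' \<le> h0' \<longrightarrow> g0' \<in> H'" using h that(5) by blast
        then have "g0' \<in> H'" using True that(6) by simp
        then show False using that(3,4) by auto
      next
        case False
        have "\<forall>a\<in>G'. \<forall>b\<in>G'. \<forall>x. a \<le> x \<and> x \<le> b \<longrightarrow> x \<in> G'" using that(1) is_interval_1 by blast
        then have "g0' \<le> h \<and> h \<le> g \<longrightarrow> h \<in> G'" using g that(4) by blast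
        then have "h \<in> G'" using False hg by simp
        then show False using that(3) h by auto
      qed
    qed
  qed
  have "g0 \<noteq> h0" using g0 h0 assms(3) by auto
  then consider "g0 < h0" | "h0 < g0" by linarith
  then show ?thesis
  proof cases
    case 1 then show ?thesis using key[OF assms(1,2,3) g0 h0] by blast
  next
    case 2 then have "\<forall>h\<in>H. \<forall>g\<in>G. h < g" using key[OF assms(2,1) _ h0 g0] assms(3) by blast
    then show ?thesis by blast
  qed
qed


theorem proposition2p1:
  fixes M :: "'a measure" and X Y :: "'a \<Rightarrow> real" and G H G' H' :: "real set"
  assumes "prob_space M"
    and "X \<in> borel_measurable M" and "Y \<in> borel_measurable M"
    and "is_interval G" and "is_interval H" and "G \<inter> H = {}"
    and "G' \<in> sets borel" and "H' \<in> sets borel" and "G' \<subseteq> G" and "H' \<subseteq> H"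
    and "AE \<omega> in M. (X \<omega> \<in> G') = (Y \<omega> \<in> H')"
    and "measure M {\<omega> \<in> space M. X \<omega> \<in> G'} > 0"
  shows "\<not> (\<exists>Z. integrable M Z \<and>
            (AE \<omega> in M. X \<omega> = real_cond_exp M (gen_sigma M X) Z \<omega>) \<and>
            (AE \<omega> in M. Y \<omega> = real_cond_exp M (gen_sigma M Y) Z \<omega>))
         \<and> ((\<forall>\<omega>\<in>space M. X \<omega> \<in> {0..1} \<and> Y \<omega> \<in> {0..1}) \<longrightarrow> \<not> coherent M X Y)"
proof -
  interpret prob_space M by fact
  let ?A = "{\<omega> \<in> space M. X \<omega> \<in> G'}"
  let ?B = "{\<omega> \<in> space M. Y \<omega> \<in> H'}"
  have AM: "?A \<in> sets M" using assms(2,7) by measurable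
  have BM: "?B \<in> sets M" using assms(3,8) by measurable
  have AEind: "AE \<omega> in M. indicator ?A \<omega> = (indicator ?B \<omega> :: real)"
    using assms(11) AE_space by eventually_elim (auto simp: indicator_def)
  have AEin: "AE \<omega> in M. \<omega> \<in> ?A \<longrightarrow> X \<omega> \<in> G \<and> Y \<omega> \<in> H"
    using assms(11) AE_space by eventually_elim (use assms(9,10) in auto)
  have part1: "\<not> (\<exists>Z. integrable M Z \<and>
            (AE \<omega> in M. X \<omega> = real_cond_exp M (gen_sigma M X) Z \<omega>) \<and>
            (AE \<omega> in M. Y \<omega> = real_cond_exp M (gen_sigma M Y) Z \<omega>))"
  proof
    assume "\<exists>Z. integrable M Z \<and>
            (AE \<omega> in M. X \<omega> = real_cond_exp M (gen_sigma M X) Z \<omega>) \<and>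
            (AE \<omega> in M. Y \<omega> = real_cond_exp M (gen_sigma M Y) Z \<omega>)"
    then obtain Z where Z: "integrable M Z"
      and hX: "AE \<omega> in M. X \<omega> = real_cond_exp M (gen_sigma M X) Z \<omega>"
      and hY: "AE \<omega> in M. Y \<omega> = real_cond_exp M (gen_sigma M Y) Z \<omega>" by blast
    note eX = cond_exp_ind[OF assms(1,2,7) Z hX]
    note eY = cond_exp_ind[OF assms(1,3,8) Z hY]
    have mZ: "Z \<in> borel_measurable M" using Z by (rule borel_measurable_integrable)
    have mAZ: "(\<lambda>\<omega>. indicator ?A \<omega> * Z \<omega>) \<in> borel_measurable M"
      by (intro borel_measurable_times borel_measurable_indicator AM mZ)
    have mBZ: "(\<lambda>\<omega>. indicator ?B \<omega> * Z \<omega>) \<in> borel_measurable M"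
      by (intro borel_measurable_times borel_measurable_indicator BM mZ)
    have mAY: "(\<lambda>\<omega>. indicator ?A \<omega> * Y \<omega>) \<in> borel_measurable M"
      by (intro borel_measurable_times borel_measurable_indicator AM assms(3))
    have mBY: "(\<lambda>\<omega>. indicator ?B \<omega> * Y \<omega>) \<in> borel_measurable M"
      by (intro borel_measurable_times borel_measurable_indicator BM assms(3))
    have c1: "(\<integral>\<omega>. indicator ?A \<omega> * Z \<omega> \<partial>M) = (\<integral>\<omega>. indicator ?B \<omega> * Z \<omega> \<partial>M)"
      by (rule integral_cong_AE[OF mAZ mBZ]) (use AEind in eventually_elim, simp)
    have AEY: "AE \<omega> in M. indicator ?B \<omega> * Y \<omega> = indicator ?A \<omega> * Y \<omega>"
      using AEind by eventually_elim simp
    have c2: "(\<integral>\<omega>. indicator ?B \<omega> * Y \<omega> \<partial>M) = (\<integral>\<omega>. indicator ?A \<omega> * Y \<omega> \<partial>M)"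
      by (rule integral_cong_AE[OF mBY mAY AEY])
    have iAY: "integrable M (\<lambda>\<omega>. indicator ?A \<omega> * Y \<omega>)"
      by (rule integrable_cong_AE_imp[OF eY(2) mAY AEY])
    have eq: "(\<integral>\<omega>. indicator ?A \<omega> * X \<omega> \<partial>M) = (\<integral>\<omega>. indicator ?A \<omega> * Y \<omega> \<partial>M)"
      using eX(1) eY(1) c1 c2 by simp
    have I1: "(\<integral>\<omega>. indicator ?A \<omega> * Y \<omega> - indicator ?A \<omega> * X \<omega> \<partial>M) = 0"
      using Bochner_Integration.integral_diff[OF iAY eX(2)] eq by simp
    have I2: "(\<integral>\<omega>. indicator ?A \<omega> * X \<omega> - indicator ?A \<omega> * Y \<omega> \<partial>M) = 0"
      using Bochner_Integration.integral_diff[OF eX(2) iAY] eq by simp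
    have i1: "integrable M (\<lambda>\<omega>. indicator ?A \<omega> * Y \<omega> - indicator ?A \<omega> * X \<omega>)"
      using iAY eX(2) by (rule Bochner_Integration.integrable_diff)
    have i2: "integrable M (\<lambda>\<omega>. indicator ?A \<omega> * X \<omega> - indicator ?A \<omega> * Y \<omega>)"
      using eX(2) iAY by (rule Bochner_Integration.integrable_diff)
    from interval_order[OF assms(4,5,6)]
    have "measure M ?A = 0"
    proof
      assume o: "\<forall>g\<in>G. \<forall>h\<in>H. g < h"
      show ?thesis
      proof (rule zero_int_pos[OF assms(1) i1 I1 AM])
        show "AE \<omega> in M. (\<omega> \<in> ?A \<longrightarrow> indicator ?A \<omega> * Y \<omega> - indicator ?A \<omega> * X \<omega> > 0) \<and>
            (\<omega> \<notin> ?A \<longrightarrow> indicator ?A \<omega> * Y \<omega> - indicator ?A \<omega> * X \<omega> = 0)"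
          using AEin by eventually_elim (use o in auto)
      qed
    next
      assume o: "\<forall>g\<in>G. \<forall>h\<in>H. h < g"
      show ?thesis
      proof (rule zero_int_pos[OF assms(1) i2 I2 AM])
        show "AE \<omega> in M. (\<omega> \<in> ?A \<longrightarrow> indicator ?A \<omega> * X \<omega> - indicator ?A \<omega> * Y \<omega> > 0) \<and>
            (\<omega> \<notin> ?A \<longrightarrow> indicator ?A \<omega> * X \<omega> - indicator ?A \<omega> * Y \<omega> = 0)"
          using AEin by eventually_elim (use o in auto)
      qed
    qed
    then show False using assms(12) by simp
  qed
  moreover have "\<not> coherent M X Y"
  proof
    assume "coherent M X Y"
    then obtain A where A: "A \<in> sets M"
      and h1: "AE \<omega> in M. X \<omega> = real_cond_exp M (gen_sigma M X) (indicator A) \<omega>"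
      and h2: "AE \<omega> in M. Y \<omega> = real_cond_exp M (gen_sigma M Y) (indicator A) \<omega>"
      unfolding coherent_def by blast
    have "integrable M (indicator A :: 'a \<Rightarrow> real)" using A by (simp add: emeasure_finite less_top[symmetric])
    with h1 h2 part1 show False by blast
  qed
  ultimately show ?thesis by blast
qed

end
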